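(* Let $A$ be a Nakayama algebra with $n$ simple modules. The following are equivalent: (1) $A$ has finite global dimension and magnitude one; (2) $A$ has a unique (up to isomorphism) indecomposable projective module of dimension $n$; (3) $A$ has finite global dimension and Loewy length at least $n$.
   Context: Nakayama algebras are connected finite-dimensional algebras over an algebraically closed field $K$ all of whose indecomposable modules are uniserial, given as bound quiver algebras on a linear quiver $0\to\cdots\to n-1$ or cyclic quiver $0\to\cdots\to n-1\to 0$ with admissible relations. The Kupisch series is $[c_0,\dots,c_{n-1}]$ with $c_i=\dim_K e_iA$ the dimension of the $i$-th indecomposable projective module; the Loewy length is $\max_i c_i$. The Cartan matrix $\mathbf C_A$ has entries $\dim_K e_iAe_j$; for $A$ of finite global dimension it is invertible, and the magnitude of $A$ is the sum of all entries of $\mathbf C_A^{-1}$. *)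

theory Defs
  imports Complex_Main
begin

text \<open>A basic connected Nakayama algebra with n simple modules (vertices 0..n-1) is determined
up to isomorphism by its Kupisch series c 0, ..., c (n-1), where c i = dim e_i A.
Arrows go i -> i+1 (indices mod n in the cyclic case); e_i A is uniserial with
composition factors S_i, S_(i+1), ..., S_(i + c i - 1) (indices mod n).\<close>

definition nakayama_linear :: "nat \<Rightarrow> (nat \<Rightarrow> nat) \<Rightarrow> bool" where
  "nakayama_linear n c \<longleftrightarrow> n \<ge> 1 \<and> c (n - 1) = 1 \<and>
     (\<forall>i. i + 1 < n \<longrightarrow> c i \<ge> 2 \<and> c (i + 1) \<ge> c i - 1)"

definition nakayama_cyclic :: "nat \<Rightarrow> (nat \<Rightarrow> nat) \<Rightarrow> bool" where
  "nakayama_cyclic n c \<longleftrightarrow> n \<ge> 1 \<and>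
     (\<forall>i<n. c i \<ge> 2 \<and> c ((i + 1) mod n) \<ge> c i - 1)"

definition nakayama_kupisch :: "nat \<Rightarrow> (nat \<Rightarrow> nat) \<Rightarrow> bool" where
  "nakayama_kupisch n c \<longleftrightarrow> nakayama_linear n c \<or> nakayama_cyclic n c"

text \<open>Indecomposable modules: pairs (i, k) with 1 \<le> k \<le> c i, standing for e_i A / e_i J^k
(top S_i, length k). Its first syzygy e_i J^k is the
indecomposable module with top S_((i+k) mod n) and length c i - k.\<close>

definition syzygy :: "nat \<Rightarrow> (nat \<Rightarrow> nat) \<Rightarrow> nat \<times> nat \<Rightarrow> nat \<times> nat" where
  "syzygy n c M = ((fst M + snd M) mod n, c (fst M) - snd M)"

definition is_projective :: "(nat \<Rightarrow> nat) \<Rightarrow> nat \<times> nat \<Rightarrow> bool" where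
  "is_projective c M \<longleftrightarrow> snd M = c (fst M)"

definition pd_le :: "nat \<Rightarrow> (nat \<Rightarrow> nat) \<Rightarrow> nat \<times> nat \<Rightarrow> nat \<Rightarrow> bool" where
  "pd_le n c M d \<longleftrightarrow> (\<exists>m\<le>d. is_projective c ((syzygy n c ^^ m) M))"

text \<open>Global dimension is finite iff all simple modules (i,1) have finite projective dimension
(equivalently there is a uniform bound, since there are finitely many simples).\<close>
definition finite_gldim :: "nat \<Rightarrow> (nat \<Rightarrow> nat) \<Rightarrow> bool" where
  "finite_gldim n c \<longleftrightarrow> (\<exists>d. \<forall>i<n. pd_le n c (i, 1) d)"

definition loewy_length :: "nat \<Rightarrow> (nat \<Rightarrow> nat) \<Rightarrow> nat" where
  "loewy_length n c = Max (c ` {..<n})"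

text \<open>Cartan matrix: C i j = dim e_i A e_j = multiplicity of S_j in e_i A.\<close>
definition cartan :: "nat \<Rightarrow> (nat \<Rightarrow> nat) \<Rightarrow> nat \<Rightarrow> nat \<Rightarrow> rat" where
  "cartan n c i j = of_nat (card {k. k < c i \<and> (i + k) mod n = j})"

definition is_inverse_mat :: "nat \<Rightarrow> (nat \<Rightarrow> nat \<Rightarrow> rat) \<Rightarrow> (nat \<Rightarrow> nat \<Rightarrow> rat) \<Rightarrow> bool" where
  "is_inverse_mat n C D \<longleftrightarrow>
     (\<forall>i<n. \<forall>j<n. (\<Sum>k<n. C i k * D k j) = (if i = j then 1 else 0)) \<and>
     (\<forall>i<n. \<forall>j<n. (\<Sum>k<n. D i k * C k j) = (if i = j then 1 else 0))"

text \<open>Magnitude: sum of all entries of the inverse of the Cartan matrix (meaningful when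
the Cartan matrix is invertible, e.g. for finite global dimension).\<close>
definition magnitude :: "nat \<Rightarrow> (nat \<Rightarrow> nat) \<Rightarrow> rat" where
  "magnitude n c = (THE s. \<exists>D. is_inverse_mat n (cartan n c) D \<and> s = (\<Sum>i<n. \<Sum>j<n. D i j))"

end

theory Submission imports Defs "Jordan_Normal_Form.Determinant" begin

lemma left_right_inv:
  fixes C D :: "nat \<Rightarrow> nat \<Rightarrow> rat"
  assumes h: "\<forall>i<n. \<forall>j<n. (\<Sum>k<n. D i k * C k j) = (if i = j then 1 else 0)"
  shows "\<forall>i<n. \<forall>j<n. (\<Sum>k<n. C i k * D k j) = (if i = j then 1 else 0)"
proof -
  define A where "A = mat n n (\<lambda>(i,j). D i j)"
  define B where "B = mat n n (\<lambda>(i,j). C i j)"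
  have Ac: "A \<in> carrier_mat n n" and Bc: "B \<in> carrier_mat n n" by (auto simp: A_def B_def)
  have "A * B = 1\<^sub>m n"
    apply (rule eq_matI)
    using h by (auto simp: A_def B_def scalar_prod_def atLeast0LessThan)
  from mat_mult_left_right_inverse[OF Ac Bc this] have BA: "B * A = 1\<^sub>m n" .
  show ?thesis
  proof (intro allI impI)
    fix i j assume "i < n" "j < n"
    then have "(B * A) $$ (i,j) = (1\<^sub>m n :: rat mat) $$ (i,j)" using BA by simp
    then show "(\<Sum>k<n. C i k * D k j) = (if i = j then 1 else 0)"
      using \<open>i<n\<close> \<open>j<n\<close> by (simp add: A_def B_def scalar_prod_def atLeast0LessThan)
  qed
qed

lemma tele:
  fixes g :: "nat \<Rightarrow> rat"
  shows "(\<Sum>k<m. (-1) ^ k * (g k + g (Suc k))) + (-1) ^ m * g m = g 0"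
proof (induction m)
  case 0 then show ?case by simp
next
  case (Suc m)
  have "(\<Sum>k<Suc m. (-1) ^ k * (g k + g (Suc k))) + (-1) ^ Suc m * g (Suc m)
      = ((\<Sum>k<m. (-1) ^ k * (g k + g (Suc k))) + (-1) ^ m * g m)"
    by (simp add: algebra_simps)
  then show ?case using Suc by simp
qed

lemma alt_sum: "(\<Sum>k\<le>m. (-1::rat) ^ k) = (if even m then 1 else 0)"
  by (induction m) auto


lemma mono_down:
  fixes g :: "int \<Rightarrow> int"
  assumes m: "mono g" and u: "g u = u"
  shows "u \<le> x \<Longrightarrow> g x \<le> x \<Longrightarrow> \<exists>k. g ((g ^^ k) x) = (g ^^ k) x"
proof (induction "nat (x - u)" arbitrary: x rule: less_induct)
  case less
  show ?case
  proof (cases "g x = x")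
    case True then show ?thesis by (intro exI[of _ 0]) simp
  next
    case False
    then have lt: "g x < x" using less.prems by simp
    have ge: "u \<le> g x" using monoD[OF m less.prems(1)] u by simp
    have "g (g x) \<le> g x" using monoD[OF m] lt by simp
    then obtain k where "g ((g ^^ k) (g x)) = (g ^^ k) (g x)"
      using less.hyps[of "g x"] lt ge by force
    then show ?thesis by (intro exI[of _ "Suc k"]) (simp only: funpow_Suc_right o_apply)
  qed
qed

lemma mono_up:
  fixes g :: "int \<Rightarrow> int"
  assumes m: "mono g" and v: "g v = v"
  shows "x \<le> v \<Longrightarrow> x \<le> g x \<Longrightarrow> \<exists>k. g ((g ^^ k) x) = (g ^^ k) x"
proof (induction "nat (v - x)" arbitrary: x rule: less_induct)
  case less
  show ?case
  proof (cases "g x = x")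
    case True then show ?thesis by (intro exI[of _ 0]) simp
  next
    case False
    then have lt: "x < g x" using less.prems by simp
    have ge: "g x \<le> v" using monoD[OF m less.prems(1)] v by simp
    have "g x \<le> g (g x)" using monoD[OF m] lt by simp
    then obtain k where "g ((g ^^ k) (g x)) = (g ^^ k) (g x)"
      using less.hyps[of "g x"] lt ge by force
    then show ?thesis by (intro exI[of _ "Suc k"]) (simp only: funpow_Suc_right o_apply)
  qed
qed

lemma mono_conv:
  fixes g :: "int \<Rightarrow> int"
  assumes "mono g" "g u = u" "g v = v" "u \<le> x" "x \<le> v"
  shows "\<exists>k. g ((g ^^ k) x) = (g ^^ k) x"
proof (cases "g x \<le> x")
  case True then show ?thesis using mono_down[OF assms(1,2)] assms by blast
next
  case False then show ?thesis using mono_up[OF assms(1,3)] assms by force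
qed

lemma pow_fix: "g x = x \<Longrightarrow> (g ^^ k) x = x"
  by (induction k) auto

lemma pow_stable: "g ((g ^^ k) x) = (g ^^ k) x \<Longrightarrow> k \<le> m \<Longrightarrow> (g ^^ m) x = (g ^^ k) x"
proof -
  assume a: "g ((g ^^ k) x) = (g ^^ k) x" and "k \<le> m"
  then obtain t where "m = t + k" by (metis add.commute le_add_diff_inverse)
  then have "(g ^^ m) x = (g ^^ t) ((g ^^ k) x)" by (simp add: funpow_add)
  then show ?thesis using pow_fix[of g "(g ^^ k) x" t, OF a] by simp
qed

lemma mono_pow: fixes g :: "int \<Rightarrow> int" shows "mono g \<Longrightarrow> x \<le> y \<Longrightarrow> (g ^^ k) x \<le> (g ^^ k) y"
  by (induction k) (auto intro: monoD)

lemma fixpt_exists: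
  fixes g :: "int \<Rightarrow> int"
  assumes m: "mono g" and hi: "g hi \<le> hi"
  shows "lo \<le> hi \<Longrightarrow> lo \<le> g lo \<Longrightarrow> \<exists>x. lo \<le> x \<and> x \<le> hi \<and> g x = x"
proof (induction "nat (hi - lo)" arbitrary: lo rule: less_induct)
  case less
  show ?case
  proof (cases "g lo = lo")
    case True then show ?thesis using less.prems by blast
  next
    case False
    then have lt: "lo + 1 \<le> g lo" using less.prems by simp
    show ?thesis
    proof (cases "lo = hi")
      case True then show ?thesis using hi less.prems by force
    next
      case False
      then have "lo + 1 \<le> hi" using less.prems by simp
      moreover have "lo + 1 \<le> g (lo + 1)" using monoD[OF m, of lo "lo + 1"] lt by simp
      ultimately obtain x where "lo + 1 \<le> x \<and> x \<le> hi \<and> g x = x"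
        using less.hyps[of "lo + 1"] by force
      then show ?thesis by (intro exI[of _ x]) auto
    qed
  qed
qed

locale nak =
  fixes n :: nat and c :: "nat \<Rightarrow> nat"
  assumes n_pos: "n \<ge> 1"
    and c_pos: "\<And>i. i < n \<Longrightarrow> 1 \<le> c i"
    and c_kup: "\<And>i. i < n \<Longrightarrow> c i \<le> c ((i + 1) mod n) + 1"
begin

definition F :: "int \<Rightarrow> int" where
  "F x = x + int (c (nat (x mod int n)))"

definition h :: "int \<Rightarrow> int" where
  "h x = F x - int n"

definition rep :: "int \<times> int \<Rightarrow> nat \<times> nat" where
  "rep p = (nat (fst p mod int n), nat (snd p - fst p))"

definition stp :: "int \<times> int \<Rightarrow> int \<times> int" where
  "stp p = (snd p, F (fst p))"

lemma nmod_lt: "nat (x mod int n) < n"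
  using n_pos by (simp add: nat_less_iff)

lemma F_ge: "F x \<ge> x + 1"
  using c_pos[OF nmod_lt[of x]] by (simp add: F_def)

lemma F_step: "F x \<le> F (x + 1)"
proof -
  define i where "i = nat (x mod int n)"
  have i: "i < n" using nmod_lt i_def by simp
  have "nat ((x + 1) mod int n) = (i + 1) mod n"
  proof -
    have "(x + 1) mod int n = (x mod int n + 1) mod int n" by (simp add: mod_add_left_eq)
    also have "x mod int n + 1 = int (i + 1)" using n_pos by (simp add: i_def)
    finally show ?thesis by (simp add: nat_mod_as_int)
  qed
  then show ?thesis using c_kup[OF i] by (simp add: F_def i_def[symmetric])
qed

lemma F_mono_aux: "F x \<le> F (x + int d)"
proof (induction d)
  case 0 then show ?case by simp
next
  case (Suc d)
  have "F (x + int d) \<le> F (x + int d + 1)" by (rule F_step)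
  moreover have "x + int (Suc d) = x + int d + 1" by simp
  ultimately show ?case using Suc by (metis order_trans)
qed

lemma F_mono: "x \<le> y \<Longrightarrow> F x \<le> F y"
  using F_mono_aux[of x "nat (y - x)"] by simp

lemma F_per: "F (x + t * int n) = F x + t * int n"
  by (simp add: F_def)

lemma h_mono: "mono h"
  by (auto simp: mono_def h_def intro: F_mono)

lemma h_per: "h (x + t * int n) = h x + t * int n"
  by (simp add: h_def F_per)

lemma h_fix_iff: "h x = x \<longleftrightarrow> c (nat (x mod int n)) = n"
  by (auto simp: h_def F_def)

lemma Fpow_h: "(F ^^ k) x = (h ^^ k) x + int k * int n"
proof (induction k)
  case 0 then show ?case by simp
next
  case (Suc k)
  have "(F ^^ Suc k) x = F ((h ^^ k) x + int k * int n)" using Suc by simp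
  also have "\<dots> = F ((h ^^ k) x) + int k * int n" by (rule F_per)
  also have "\<dots> = (h ^^ Suc k) x + int (Suc k) * int n" by (simp add: h_def algebra_simps)
  finally show ?case .
qed

lemma hpow_per: "(h ^^ k) (x + t * int n) = (h ^^ k) x + t * int n"
  by (induction k) (simp_all add: h_per)

lemma hpow_mono: "x \<le> y \<Longrightarrow> (h ^^ k) x \<le> (h ^^ k) y"
  by (induction k) (auto intro: monoD[OF h_mono])

lemma Fpow_mono: "x \<le> y \<Longrightarrow> (F ^^ k) x \<le> (F ^^ k) y"
  by (induction k) (auto intro: F_mono)

definition valid :: "int \<times> int \<Rightarrow> bool" where
  "valid p \<longleftrightarrow> fst p \<le> snd p \<and> snd p \<le> F (fst p)"

lemma valid_stp: "valid p \<Longrightarrow> valid (stp p)"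
  by (auto simp: valid_def stp_def intro: F_mono)

lemma c_rep: "int (c (nat (a mod int n))) = F a - a"
  by (simp add: F_def)

lemma syz_rep: assumes "valid p" shows "syzygy n c (rep p) = rep (stp p)"
proof -
  obtain a b where p: "p = (a, b)" by fastforce
  have ab: "a \<le> b" "b \<le> F a" using assms p by (auto simp: valid_def)
  have 1: "(nat (a mod int n) + nat (b - a)) mod n = nat (b mod int n)"
  proof -
    have "int ((nat (a mod int n) + nat (b - a)) mod n) = (a mod int n + (b - a)) mod int n"
      using ab n_pos by (simp add: of_nat_mod)
    also have "\<dots> = b mod int n" by (simp add: mod_add_left_eq)
    finally show ?thesis by linarith
  qed
  have 2: "c (nat (a mod int n)) - nat (b - a) = nat (F a - b)"
    using c_rep[of a] ab by linarith
  show ?thesis using 1 2 by (simp add: p rep_def stp_def syzygy_def)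
qed

lemma proj_rep: assumes "valid p" shows "is_projective c (rep p) \<longleftrightarrow> snd p = F (fst p)"
  using assms c_rep[of "fst p"] by (auto simp: valid_def is_projective_def rep_def)

lemma syz_iter: "valid p \<Longrightarrow> (syzygy n c ^^ m) (rep p) = rep ((stp ^^ m) p) \<and> valid ((stp ^^ m) p)"
proof (induction m arbitrary: p)
  case 0 then show ?case by simp
next
  case (Suc m)
  have "(syzygy n c ^^ Suc m) (rep p) = (syzygy n c ^^ m) (syzygy n c (rep p))"
    by (simp only: funpow_Suc_right o_apply)
  then have "(syzygy n c ^^ Suc m) (rep p) = (syzygy n c ^^ m) (rep (stp p))"
    using syz_rep[OF Suc.prems] by simp
  moreover have "(stp ^^ Suc m) p = (stp ^^ m) (stp p)" by (simp only: funpow_Suc_right o_apply)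
  ultimately show ?case using Suc.IH[OF valid_stp[OF Suc.prems]] by simp
qed

lemma valid_simple: "valid (a, a + 1)"
  using F_ge[of a] by (simp add: valid_def)

lemma rep_simple: "rep (a, a + 1) = (nat (a mod int n), 1)"
  by (simp add: rep_def)

definition proj_at :: "int \<Rightarrow> nat \<Rightarrow> bool" where
  "proj_at a m \<longleftrightarrow> snd ((stp ^^ m) (a, a + 1)) = F (fst ((stp ^^ m) (a, a + 1)))"

lemma proj_simple: "is_projective c ((syzygy n c ^^ m) (nat (a mod int n), 1)) \<longleftrightarrow> proj_at a m"
proof -
  have "(syzygy n c ^^ m) (nat (a mod int n), 1) = rep ((stp ^^ m) (a, a + 1))"
    and v: "valid ((stp ^^ m) (a, a + 1))"
    using syz_iter[OF valid_simple[of a], of m] by (simp_all add: rep_simple)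
  then show ?thesis using proj_rep[OF v] by (simp add: proj_at_def)
qed

lemma stp_even: "(stp ^^ (2 * k)) (a, b) = ((F ^^ k) a, (F ^^ k) b)"
proof (induction k)
  case 0 then show ?case by simp
next
  case (Suc k)
  have "(stp ^^ (2 * Suc k)) (a, b) = stp (stp ((stp ^^ (2 * k)) (a, b)))"
    by (simp add: mult_2)
  then show ?case using Suc by (simp add: stp_def)
qed

lemma stp_odd: "(stp ^^ Suc (2 * k)) (a, b) = ((F ^^ k) b, (F ^^ Suc k) a)"
  using stp_even[of k a b] by (simp add: stp_def)

definition cnd :: "int \<Rightarrow> nat \<Rightarrow> bool" where
  "cnd a k \<longleftrightarrow> (F ^^ k) (a + 1) = (F ^^ Suc k) a \<or> (F ^^ Suc k) a = (F ^^ Suc k) (a + 1)"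

lemma proj_cnd: "(\<exists>m. proj_at a m) \<longleftrightarrow> (\<exists>k. cnd a k)"
proof
  assume "\<exists>m. proj_at a m"
  then obtain m where m: "proj_at a m" by blast
  show "\<exists>k. cnd a k"
  proof (cases "even m")
    case True
    then obtain k where "m = 2 * k" by blast
    then have "cnd a k" using m by (simp add: proj_at_def stp_even cnd_def)
    then show ?thesis by blast
  next
    case False
    then obtain k where "m = 2 * k + 1" using oddE by blast
    then have "cnd a k" using m by (simp add: proj_at_def stp_even stp_def cnd_def)
    then show ?thesis by blast
  qed
next
  assume "\<exists>k. cnd a k"
  then obtain k where k: "cnd a k" by blast
  then show "\<exists>m. proj_at a m"
  proof (cases "(F ^^ k) (a + 1) = (F ^^ Suc k) a")
    case True
    then have "proj_at a (2 * k)" by (simp add: proj_at_def stp_even)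
    then show ?thesis by blast
  next
    case False
    then have "(F ^^ Suc k) a = (F ^^ Suc k) (a + 1)" using k by (simp add: cnd_def)
    then have "proj_at a (2 * k + 1)" by (simp add: proj_at_def stp_even stp_def)
    then show ?thesis by blast
  qed
qed

lemma Fpow_add: "(F ^^ (k + t)) x = (F ^^ t) ((F ^^ k) x)"
  by (metis add.commute comp_apply funpow_add)

lemma cnd_persist: "cnd a k \<Longrightarrow> cnd a (k + t)"
proof -
  assume "cnd a k"
  then show "cnd a (k + t)"
    unfolding cnd_def
  proof
    assume e: "(F ^^ k) (a + 1) = (F ^^ Suc k) a"
    have "(F ^^ (k + t)) (a + 1) = (F ^^ t) ((F ^^ k) (a + 1))" by (simp only: Fpow_add funpow_Suc_right o_apply add_Suc)
    also have "\<dots> = (F ^^ t) ((F ^^ Suc k) a)" using e by simp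
    also have "\<dots> = (F ^^ Suc (k + t)) a" by (simp only: Fpow_add funpow_Suc_right o_apply add_Suc)
    finally show "(F ^^ (k + t)) (a + 1) = (F ^^ Suc (k + t)) a \<or> (F ^^ Suc (k + t)) a = (F ^^ Suc (k + t)) (a + 1)" by blast
  next
    assume e: "(F ^^ Suc k) a = (F ^^ Suc k) (a + 1)"
    have "(F ^^ Suc (k + t)) a = (F ^^ t) ((F ^^ Suc k) a)" by (simp only: Fpow_add funpow_Suc_right o_apply add_Suc)
    also have "\<dots> = (F ^^ t) ((F ^^ Suc k) (a + 1))" using e by simp
    also have "\<dots> = (F ^^ Suc (k + t)) (a + 1)" by (simp only: Fpow_add funpow_Suc_right o_apply add_Suc)
    finally show "(F ^^ (k + t)) (a + 1) = (F ^^ Suc (k + t)) a \<or> (F ^^ Suc (k + t)) a = (F ^^ Suc (k + t)) (a + 1)" by blast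
  qed
qed

lemma bound_exists: "(\<forall>i<(N::nat). \<exists>m::nat. P i m) \<Longrightarrow> \<exists>d::nat. \<forall>i<N. \<exists>m\<le>d. P i m"
proof (induction N)
  case 0 then show ?case by simp
next
  case (Suc N)
  then obtain d where d: "\<forall>i<N. \<exists>m\<le>d. P i m" by auto
  obtain m0 where m0: "P N m0" using Suc.prems by auto
  show ?case
  proof (rule exI[of _ "max d m0"], intro allI impI)
    fix i assume "i < Suc N"
    show "\<exists>m\<le>max d m0. P i m"
    proof (cases "i = N")
      case True
      have "m0 \<le> max d m0" by simp
      then show ?thesis using m0 True by blast
    next
      case False
      then have "i < N" using \<open>i < Suc N\<close> by simp
      then obtain m where "m \<le> d" "P i m" using d by blast
      then show ?thesis by (intro exI[of _ m]) simp
    qed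
  qed
qed

lemma fg_iff: "finite_gldim n c \<longleftrightarrow> (\<forall>a. \<exists>k. cnd a k)"
proof
  assume "finite_gldim n c"
  then obtain d where d: "\<forall>i<n. pd_le n c (i, 1) d" by (auto simp: finite_gldim_def)
  show "\<forall>a. \<exists>k. cnd a k"
  proof
    fix a
    from d nmod_lt[of a] obtain m where "is_projective c ((syzygy n c ^^ m) (nat (a mod int n), 1))"
      by (auto simp: pd_le_def)
    then have "proj_at a m" using proj_simple[of m a] by simp
    then show "\<exists>k. cnd a k" using proj_cnd by blast
  qed
next
  assume H: "\<forall>a. \<exists>k. cnd a k"
  have "\<forall>i<n. \<exists>m. is_projective c ((syzygy n c ^^ m) (i, 1))"
  proof (intro allI impI)
    fix i assume i: "i < n"
    obtain m where "proj_at (int i) m" using H proj_cnd by blast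
    then have "is_projective c ((syzygy n c ^^ m) (nat (int i mod int n), 1))" using proj_simple[of m "int i"] by simp
    then show "\<exists>m. is_projective c ((syzygy n c ^^ m) (i, 1))" using i by (auto simp: nat_mod_as_int[symmetric])
  qed
  from bound_exists[OF this] show "finite_gldim n c" by (auto simp: finite_gldim_def pd_le_def)
qed

lemma K3: assumes "card {i. i < n \<and> c i = n} = 1" shows "finite_gldim n c"
proof -
  obtain q where q: "{i. i < n \<and> c i = n} = {q}" by (rule card_1_singletonE[OF assms])
  have "q \<in> {i. i < n \<and> c i = n}" using q by simp
  then have qn: "q < n" "c q = n" by simp_all
  have fixq: "h y = y \<longleftrightarrow> y mod int n = int q" for y
  proof -
    have "h y = y \<longleftrightarrow> nat (y mod int n) \<in> {i. i < n \<and> c i = n}"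
      using nmod_lt[of y] by (simp add: h_fix_iff)
    also have "\<dots> \<longleftrightarrow> nat (y mod int n) = q" using q by simp
    also have "\<dots> \<longleftrightarrow> y mod int n = int q" using n_pos by (simp add: nat_eq_iff)
    finally show ?thesis .
  qed
  have around: "\<exists>u. u \<le> x \<and> x \<le> u + int n \<and> h u = u \<and> h (u + int n) = u + int n" for x
  proof -
    define u where "u = int q + ((x - int q) div int n) * int n"
    have e: "(x - int q) div int n * int n + (x - int q) mod int n = x - int q"
      by (rule div_mult_mod_eq)
    have b: "0 \<le> (x - int q) mod int n" "(x - int q) mod int n < int n" using n_pos by auto
    have "u mod int n = int q" using qn by (simp add: u_def)
    then have "h u = u" using fixq by simp
    moreover have "h (u + int n) = u + int n" using h_per[of u 1] \<open>h u = u\<close> by simp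
    moreover have "u \<le> x" "x \<le> u + int n" using e b unfolding u_def by linarith+
    ultimately show ?thesis by blast
  qed
  have conv: "\<exists>k. h ((h ^^ k) x) = (h ^^ k) x" for x
  proof -
    obtain u where "u \<le> x \<and> x \<le> u + int n \<and> h u = u \<and> h (u + int n) = u + int n" using around by blast
    then show ?thesis using mono_conv[OF h_mono, of u "u + int n" x] by blast
  qed
  have "\<forall>a. \<exists>k. cnd a k"
  proof
    fix a
    obtain k1 where k1: "h ((h ^^ k1) a) = (h ^^ k1) a" using conv by blast
    obtain k2 where k2: "h ((h ^^ k2) (a + 1)) = (h ^^ k2) (a + 1)" using conv by blast
    define K where "K = k1 + k2"
    define A where "A = (h ^^ Suc K) a"
    define B where "B = (h ^^ Suc K) (a + 1)"
    have A1: "(h ^^ Suc K) a = (h ^^ k1) a" by (rule pow_stable[OF k1]) (simp add: K_def)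
    have A2: "(h ^^ K) a = (h ^^ k1) a" by (rule pow_stable[OF k1]) (simp add: K_def)
    have B1: "(h ^^ Suc K) (a + 1) = (h ^^ k2) (a + 1)" by (rule pow_stable[OF k2]) (simp add: K_def)
    have B2: "(h ^^ K) (a + 1) = (h ^^ k2) (a + 1)" by (rule pow_stable[OF k2]) (simp add: K_def)
    have hA: "h A = A" using k1 A1 by (simp add: A_def)
    have hB: "h B = B" using k2 B1 by (simp add: B_def)
    have Amod: "A mod int n = int q" using hA fixq by simp
    have Bmod: "B mod int n = int q" using hB fixq by simp
    have AB: "A \<le> B" unfolding A_def B_def by (rule hpow_mono) simp
    have "B \<le> (h ^^ Suc K) (a + 1 * int n)" unfolding B_def by (rule hpow_mono) (use n_pos in simp)
    then have BA: "B \<le> A + int n" using hpow_per[of "Suc K" a 1] by (simp add: A_def)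
    have "B mod int n = A mod int n" using Amod Bmod by simp
    then have "int n dvd B - A" using mod_eq_dvd_iff by blast
    then obtain t where t: "B - A = int n * t" by (auto simp: dvd_def)
    have npos: "0 < int n" using n_pos by simp
    have "0 \<le> int n * t" using AB t by simp
    then have t0: "0 \<le> t" using npos by (simp add: zero_le_mult_iff)
    have "int n * t \<le> int n" using BA t by simp
    then have t1: "t \<le> 1" using npos by (simp add: mult_le_cancel_left1)
    have FA: "(F ^^ Suc K) a = A + int (Suc K) * int n" unfolding A_def by (rule Fpow_h)
    have FA': "(F ^^ K) a = A + int K * int n" using A1 A2 by (simp add: Fpow_h A_def)
    have FB: "(F ^^ Suc K) (a + 1) = B + int (Suc K) * int n" unfolding B_def by (rule Fpow_h)
    have FB': "(F ^^ K) (a + 1) = B + int K * int n" using B1 B2 by (simp add: Fpow_h B_def)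
    show "\<exists>k. cnd a k"
    proof (cases "t = 0")
      case True
      then have "cnd a K" using FA FB t by (simp add: cnd_def)
      then show ?thesis by blast
    next
      case False
      then have "t = 1" using t0 t1 by simp
      then have "cnd a K" using FA FB' t by (simp add: cnd_def algebra_simps)
      then show ?thesis by blast
    qed
  qed
  then show ?thesis using fg_iff by simp
qed

lemma Uniq_lt:
  assumes fg: "finite_gldim n c" and ij: "i < j" "j < n" and ci: "c i = n" and cj: "c j = n"
  shows False
proof -
  define x where "x = int i"
  define y where "y = int j"
  have hx: "h x = x" using ci ij by (simp add: h_fix_iff x_def)
  have hy: "h y = y" using cj ij by (simp add: h_fix_iff y_def)
  have xy: "x < y" "0 \<le> x" "y < int n" using ij by (auto simp: x_def y_def)
  define S where "S = {w. x \<le> w \<and> w < y \<and> (\<exists>k. (h ^^ k) w = x)}"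
  have finS: "finite S" by (rule finite_subset[of _ "{x..<y}"]) (auto simp: S_def)
  have xS: "x \<in> S" using xy by (auto simp: S_def intro: exI[of _ 0])
  define z where "z = Max S"
  have zS: "z \<in> S" unfolding z_def using xS by (intro Max_in[OF finS]) auto
  have zmax: "w \<in> S \<Longrightarrow> w \<le> z" for w unfolding z_def by (rule Max_ge[OF finS])
  from zS obtain k1 where k1: "(h ^^ k1) z = x" and zb: "x \<le> z" "z < y" by (auto simp: S_def)
  have k1f: "h ((h ^^ k1) z) = (h ^^ k1) z" using k1 hx by simp
  obtain k2 where k2: "h ((h ^^ k2) (z + 1)) = (h ^^ k2) (z + 1)"
    using mono_conv[OF h_mono hx hy, of "z + 1"] zb by auto
  define l where "l = (h ^^ k2) (z + 1)"
  have lb: "x \<le> l" "l \<le> y"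
  proof -
    have "(h ^^ k2) x \<le> l" unfolding l_def by (rule hpow_mono) (use zb in simp)
    then show "x \<le> l" using pow_fix[of h x k2, OF hx] by simp
    have "l \<le> (h ^^ k2) y" unfolding l_def by (rule hpow_mono) (use zb in simp)
    then show "l \<le> y" using pow_fix[of h y k2, OF hy] by simp
  qed
  have lx: "l \<noteq> x"
  proof
    assume lx: "l = x"
    show False
    proof (cases "z + 1 < y")
      case True
      then have "z + 1 \<in> S" using lx zb by (auto simp: S_def l_def)
      then show False using zmax by fastforce
    next
      case False
      then have "z + 1 = y" using zb by simp
      then have "l = y" using pow_fix[of h y k2, OF hy] by (simp add: l_def)
      then show False using lx xy by simp
    qed
  qed
  obtain k0 where k0: "cnd z k0" using fg fg_iff by blast
  define K where "K = k0 + k1 + k2"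
  have cK: "cnd z K" using cnd_persist[OF k0, of "k1 + k2"] by (simp add: K_def add.assoc)
  have z1: "(h ^^ K) z = x" using pow_stable[OF k1f, of K] k1 by (simp add: K_def)
  have z2: "(h ^^ Suc K) z = x" using pow_stable[OF k1f, of "Suc K"] k1 by (simp add: K_def)
  have z3: "(h ^^ K) (z + 1) = l" using pow_stable[OF k2, of K] by (simp add: K_def l_def)
  have z4: "(h ^^ Suc K) (z + 1) = l" using pow_stable[OF k2, of "Suc K"] by (simp add: K_def l_def)
  have e1: "(F ^^ K) (z + 1) = l + int K * int n" using z3 Fpow_h[of K "z + 1"] by simp
  have e2: "(F ^^ Suc K) z = x + int (Suc K) * int n" using z2 Fpow_h[of "Suc K" z] by simp
  have e3: "(F ^^ Suc K) (z + 1) = l + int (Suc K) * int n" using z4 Fpow_h[of "Suc K" "z + 1"] by simp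
  from cK have "(F ^^ K) (z + 1) = (F ^^ Suc K) z \<or> (F ^^ Suc K) z = (F ^^ Suc K) (z + 1)"
    by (simp only: cnd_def)
  then show False
  proof
    assume "(F ^^ K) (z + 1) = (F ^^ Suc K) z"
    then have "l = x + int n" using e1 e2 by (simp add: algebra_simps)
    then show False using lb xy by simp
  next
    assume "(F ^^ Suc K) z = (F ^^ Suc K) (z + 1)"
    then have "l = x" using e2 e3 by simp
    then show False using lx by simp
  qed
qed

lemma Uniq:
  assumes fg: "finite_gldim n c" and "i < n" "j < n" "c i = n" "c j = n"
  shows "i = j"
proof (rule ccontr)
  assume "i \<noteq> j"
  then have "i < j \<or> j < i" by arith
  then show False using Uniq_lt[OF fg] assms by metis
qed

definition Mk :: "nat \<Rightarrow> nat \<Rightarrow> nat \<times> nat" where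
  "Mk j k = (syzygy n c ^^ k) (j, 1)"

definition mj :: "nat \<Rightarrow> nat" where
  "mj j = (LEAST m. is_projective c (Mk j m))"

definition Lm :: "nat \<Rightarrow> nat \<Rightarrow> rat" where
  "Lm j i = (\<Sum>k\<le>mj j. (-1) ^ k * (if fst (Mk j k) = i then 1 else 0))"

definition sig :: "nat \<Rightarrow> nat" where
  "sig j = (if even (mj j) then 1 else 0)"

definition dvr :: "nat \<Rightarrow> nat \<Rightarrow> nat \<Rightarrow> rat" where
  "dvr i len l = (\<Sum>t<len. if (i + t) mod n = l then 1 else 0)"

lemma Mk_valid: assumes "j < n" shows "fst (Mk j k) < n" "snd (Mk j k) \<le> c (fst (Mk j k))"
proof -
  have r: "(j, 1) = rep (int j, int j + 1)" using assms by (simp add: rep_def)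
  obtain a b where ab: "(stp ^^ k) (int j, int j + 1) = (a, b)" by fastforce
  have "Mk j k = rep (a, b)" and v: "valid (a, b)"
    using syz_iter[OF valid_simple[of "int j"], of k] ab r by (simp_all add: Mk_def)
  then show "fst (Mk j k) < n" "snd (Mk j k) \<le> c (fst (Mk j k))"
    using nmod_lt[of a] c_rep[of a] v by (auto simp: rep_def valid_def)
qed

lemma cartan_dvr: "cartan n c i l = dvr i (c i) l"
proof -
  have e: "{k. k < c i \<and> (i + k) mod n = l} = {k \<in> {..<c i}. (i + k) mod n = l}" by auto
  have "(\<Sum>k<c i. if (i + k) mod n = l then (1::rat) else 0) = (\<Sum>k\<in>{k \<in> {..<c i}. (i + k) mod n = l}. (1::rat))"
    by (rule sum.inter_filter[symmetric]) simp
  also have "\<dots> = of_nat (card {k \<in> {..<c i}. (i + k) mod n = l})" by simp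
  also have "\<dots> = of_nat (card {k. k < c i \<and> (i + k) mod n = l})" by (simp only: e)
  finally show ?thesis by (simp add: cartan_def dvr_def)
qed

lemma sum_split_add: "(\<Sum>t<a + b. f t) = (\<Sum>t<a. f t) + (\<Sum>t<b. f (a + t :: nat))"
  by (induction b) (simp_all add: add.assoc)

lemma dvr_split: assumes "len \<le> C"
  shows "dvr i C l = dvr i len l + dvr ((i + len) mod n) (C - len) l"
proof -
  have "C = len + (C - len)" using assms by simp
  then have "dvr i C l = (\<Sum>t<len + (C - len). if (i + t) mod n = l then 1 else 0)"
    by (simp add: dvr_def)
  also have "\<dots> = dvr i len l + (\<Sum>t<C - len. if (i + (len + t)) mod n = l then 1 else 0)"
    by (simp only: sum_split_add dvr_def)
  also have "(\<Sum>t<C - len. if (i + (len + t)) mod n = l then 1 else 0) = dvr ((i + len) mod n) (C - len) l"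
    unfolding dvr_def by (rule sum.cong) (simp_all add: mod_add_left_eq add.assoc)
  finally show ?thesis .
qed

lemma fg_proj: assumes "finite_gldim n c" "j < n" shows "\<exists>m. is_projective c (Mk j m)"
  using assms by (auto simp: finite_gldim_def pd_le_def Mk_def)

lemma LC: assumes fg: "finite_gldim n c" and j: "j < n" and l: "l < n"
  shows "(\<Sum>i<n. Lm j i * cartan n c i l) = (if j = l then 1 else 0)"
proof -
  define m where "m = mj j"
  have pm: "is_projective c (Mk j m)" using fg_proj[OF fg j] LeastI_ex unfolding m_def mj_def by metis
  have npk: "k < m \<Longrightarrow> \<not> is_projective c (Mk j k)" for k using not_less_Least unfolding m_def mj_def by metis
  define g where "g k = dvr (fst (Mk j k)) (snd (Mk j k)) l" for k
  have C1: "cartan n c (fst (Mk j k)) l = g k + g (Suc k)" if "k < m" for k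
  proof -
    have le: "snd (Mk j k) \<le> c (fst (Mk j k))" using Mk_valid[OF j] by simp
    have "Mk j (Suc k) = syzygy n c (Mk j k)" by (simp add: Mk_def)
    then have "Mk j (Suc k) = ((fst (Mk j k) + snd (Mk j k)) mod n, c (fst (Mk j k)) - snd (Mk j k))"
      by (simp add: syzygy_def)
    then show ?thesis using dvr_split[OF le, of "fst (Mk j k)" l] by (simp add: cartan_dvr g_def)
  qed
  have C2: "cartan n c (fst (Mk j m)) l = g m"
    using pm by (simp add: cartan_dvr g_def is_projective_def)
  have "(\<Sum>i<n. Lm j i * cartan n c i l)
      = (\<Sum>i<n. \<Sum>k\<le>m. (-1) ^ k * (if fst (Mk j k) = i then cartan n c i l else 0))"
    unfolding Lm_def m_def[symmetric] sum_distrib_right by (intro sum.cong refl) simp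
  also have "\<dots> = (\<Sum>k\<le>m. \<Sum>i<n. (-1) ^ k * (if fst (Mk j k) = i then cartan n c i l else 0))"
    by (rule sum.swap)
  also have "\<dots> = (\<Sum>k\<le>m. (-1) ^ k * cartan n c (fst (Mk j k)) l)"
  proof (rule sum.cong[OF refl])
    fix k
    have "fst (Mk j k) < n" using Mk_valid[OF j] by simp
    then show "(\<Sum>i<n. (-1) ^ k * (if fst (Mk j k) = i then cartan n c i l else 0))
             = (-1) ^ k * cartan n c (fst (Mk j k)) l"
      by (simp add: sum_distrib_left[symmetric] sum.delta)
  qed
  also have "\<dots> = (\<Sum>k<m. (-1) ^ k * cartan n c (fst (Mk j k)) l) + (-1) ^ m * cartan n c (fst (Mk j m)) l"
    by (simp add: lessThan_Suc_atMost[symmetric])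
  also have "\<dots> = (\<Sum>k<m. (-1) ^ k * (g k + g (Suc k))) + (-1) ^ m * g m"
    using C1 C2 by simp
  also have "\<dots> = g 0" by (rule tele)
  also have "g 0 = (if j = l then 1 else 0)" using j l by (simp add: g_def Mk_def dvr_def)
  finally show ?thesis .
qed

lemma Lrow: assumes j: "j < n" shows "(\<Sum>i<n. Lm j i) = of_nat (sig j)"
proof -
  have "(\<Sum>i<n. Lm j i) = (\<Sum>k\<le>mj j. \<Sum>i<n. (-1) ^ k * (if fst (Mk j k) = i then 1 else 0))"
    unfolding Lm_def by (rule sum.swap)
  also have "\<dots> = (\<Sum>k\<le>mj j. (-1::rat) ^ k)"
  proof (rule sum.cong[OF refl])
    fix k
    have "fst (Mk j k) < n" using Mk_valid[OF j] by simp
    then show "(\<Sum>i<n. (-1) ^ k * (if fst (Mk j k) = i then 1 else 0)) = (-1::rat) ^ k"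
      by (simp add: sum_distrib_left[symmetric] sum.delta)
  qed
  also have "\<dots> = of_nat (sig j)" by (simp add: alt_sum sig_def)
  finally show ?thesis .
qed

lemma inv_L: assumes fg: "finite_gldim n c" shows "is_inverse_mat n (cartan n c) Lm"
proof -
  have 1: "\<forall>i<n. \<forall>j<n. (\<Sum>k<n. Lm i k * cartan n c k j) = (if i = j then 1 else 0)"
    using LC[OF fg] by blast
  show ?thesis using left_right_inv[OF 1] 1 by (simp add: is_inverse_mat_def)
qed

lemma inv_unique:
  assumes D: "is_inverse_mat n C D" and L: "is_inverse_mat n C L" and i: "i < n" and j: "j < n"
  shows "D i j = L i j"
proof -
  have "(\<Sum>l<n. (\<Sum>k<n. D i k * C k l) * L l j) = (\<Sum>l<n. \<Sum>k<n. D i k * C k l * L l j)"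
    by (simp add: sum_distrib_right)
  also have "\<dots> = (\<Sum>k<n. \<Sum>l<n. D i k * C k l * L l j)" by (rule sum.swap)
  also have "\<dots> = (\<Sum>k<n. D i k * (\<Sum>l<n. C k l * L l j))"
    by (simp add: sum_distrib_left mult.assoc)
  finally have e: "(\<Sum>l<n. (\<Sum>k<n. D i k * C k l) * L l j) = (\<Sum>k<n. D i k * (\<Sum>l<n. C k l * L l j))" .
  have "(\<Sum>l<n. (\<Sum>k<n. D i k * C k l) * L l j) = (\<Sum>l<n. (if i = l then 1 else 0) * L l j)"
    using D i by (intro sum.cong) (auto simp: is_inverse_mat_def)
  also have "\<dots> = (\<Sum>l<n. if i = l then L l j else 0)" by (intro sum.cong refl) simp
  also have "\<dots> = L i j" using i by (simp add: sum.delta)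
  finally have a: "(\<Sum>l<n. (\<Sum>k<n. D i k * C k l) * L l j) = L i j" .
  have "(\<Sum>k<n. D i k * (\<Sum>l<n. C k l * L l j)) = (\<Sum>k<n. D i k * (if k = j then 1 else 0))"
    using L j by (intro sum.cong) (auto simp: is_inverse_mat_def)
  also have "\<dots> = (\<Sum>k<n. if k = j then D i k else 0)" by (intro sum.cong refl) simp
  also have "\<dots> = D i j" using j by (simp add: sum.delta')
  finally show ?thesis using a e by simp
qed

lemma magnitude_eq: assumes fg: "finite_gldim n c" shows "magnitude n c = of_nat (\<Sum>j<n. sig j)"
proof -
  have ex: "is_inverse_mat n (cartan n c) Lm" by (rule inv_L[OF fg])
  have val: "(\<Sum>i<n. \<Sum>j<n. Lm i j) = of_nat (\<Sum>j<n. sig j)"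
    using Lrow by (simp add: of_nat_sum)
  have "(THE s. \<exists>D. is_inverse_mat n (cartan n c) D \<and> s = (\<Sum>i<n. \<Sum>j<n. D i j)) = (\<Sum>i<n. \<Sum>j<n. Lm i j)"
  proof (rule the_equality)
    show "\<exists>D. is_inverse_mat n (cartan n c) D \<and> (\<Sum>i<n. \<Sum>j<n. Lm i j) = (\<Sum>i<n. \<Sum>j<n. D i j)"
      using ex by blast
  next
    fix s assume "\<exists>D. is_inverse_mat n (cartan n c) D \<and> s = (\<Sum>i<n. \<Sum>j<n. D i j)"
    then obtain D where D: "is_inverse_mat n (cartan n c) D" and s: "s = (\<Sum>i<n. \<Sum>j<n. D i j)" by blast
    have "(\<Sum>i<n. \<Sum>j<n. D i j) = (\<Sum>i<n. \<Sum>j<n. Lm i j)"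
      using inv_unique[OF D ex] by (intro sum.cong) auto
    then show "s = (\<Sum>i<n. \<Sum>j<n. Lm i j)" using s by simp
  qed
  then show ?thesis using val by (simp add: magnitude_def)
qed

lemma window: assumes fg: "finite_gldim n c" and i: "i < n"
  shows "(\<Sum>t<c i. sig ((i + t) mod n)) = 1"
proof -
  have CL: "\<forall>i<n. \<forall>j<n. (\<Sum>k<n. cartan n c i k * Lm k j) = (if i = j then 1 else 0)"
    using inv_L[OF fg] by (simp add: is_inverse_mat_def)
  have "(\<Sum>l<n. cartan n c i l * of_nat (sig l)) = (\<Sum>l<n. cartan n c i l * (\<Sum>j<n. Lm l j))"
    using Lrow by simp
  also have "\<dots> = (\<Sum>l<n. \<Sum>j<n. cartan n c i l * Lm l j)"
    by (simp add: sum_distrib_left)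
  also have "\<dots> = (\<Sum>j<n. \<Sum>l<n. cartan n c i l * Lm l j)"
    by (rule sum.swap)
  also have "\<dots> = (\<Sum>j<n. (if i = j then 1 else 0))"
    using CL i by (intro sum.cong) auto
  also have "\<dots> = 1" using i by simp
  finally have a: "(\<Sum>l<n. cartan n c i l * of_nat (sig l)) = 1" .
  have "(\<Sum>l<n. cartan n c i l * of_nat (sig l))
      = (\<Sum>l<n. \<Sum>t<c i. (if (i + t) mod n = l then of_nat (sig l) else 0))"
    unfolding cartan_dvr dvr_def sum_distrib_right by (intro sum.cong refl) simp
  also have "\<dots> = (\<Sum>t<c i. \<Sum>l<n. (if (i + t) mod n = l then of_nat (sig l) else 0))"
    by (rule sum.swap)
  also have "\<dots> = (\<Sum>t<c i. (of_nat (sig ((i + t) mod n)) :: rat))"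
  proof (rule sum.cong[OF refl])
    fix t
    have "(i + t) mod n < n" using n_pos by simp
    then show "(\<Sum>l<n. (if (i + t) mod n = l then of_nat (sig l) else 0)) = (of_nat (sig ((i + t) mod n)) :: rat)"
      by (simp add: sum.delta)
  qed
  finally have "(of_nat (\<Sum>t<c i. sig ((i + t) mod n)) :: rat) = 1" using a by (simp add: of_nat_sum)
  then show ?thesis by (metis of_nat_1 of_nat_eq_iff)
qed

lemma rot_sum: assumes q: "q < n" shows "(\<Sum>t<n. g ((q + t) mod n)) = (\<Sum>l<n. g l)"
proof -
  have "(\<Sum>t<n. g ((q + t) mod n)) = (\<Sum>t<(n - q) + q. g ((q + t) mod n))" using q by simp
  also have "\<dots> = (\<Sum>t<n - q. g ((q + t) mod n)) + (\<Sum>t<q. g ((q + (n - q + t)) mod n))"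
    by (rule sum_split_add)
  also have "(\<Sum>t<n - q. g ((q + t) mod n)) = (\<Sum>t<n - q. g (q + t))"
    by (intro sum.cong refl) simp
  also have "(\<Sum>t<q. g ((q + (n - q + t)) mod n)) = (\<Sum>t<q. g t)"
  proof (intro sum.cong refl)
    fix t assume "t \<in> {..<q}"
    then have "q + (n - q + t) = t + n" "t < n" using q by auto
    then show "g ((q + (n - q + t)) mod n) = g t" by simp
  qed
  also have "(\<Sum>t<n - q. g (q + t)) + (\<Sum>t<q. g t) = (\<Sum>l<q + (n - q). g l)"
    by (simp add: sum_split_add add.commute)
  also have "q + (n - q) = n" using q by simp
  finally show ?thesis .
qed

lemma sig_le1: "sig j \<le> 1" by (simp add: sig_def)

lemma KE: assumes fg: "finite_gldim n c" and q: "q < n" "c q = n"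
  shows "(\<Sum>j<n. sig j) = 1"
  using window[OF fg q(1)] q rot_sum[OF q(1), of sig] by simp

lemma KD: assumes fg: "finite_gldim n c" and ll: "loewy_length n c \<ge> n"
  shows "(\<Sum>j<n. sig j) = 1"
proof -
  have "0 \<in> {..<n}" using n_pos by simp
  then have ne: "c ` {..<n} \<noteq> {}" by blast
  have "loewy_length n c \<in> c ` {..<n}" unfolding loewy_length_def by (rule Max_in) (use ne in auto)
  then obtain i where i: "i < n" "c i \<ge> n" using ll by auto
  have w: "(\<Sum>t<c i. sig ((i + t) mod n)) = 1" by (rule window[OF fg i(1)])
  have "(\<Sum>t<n. sig ((i + t) mod n)) \<le> (\<Sum>t<c i. sig ((i + t) mod n))"
    by (rule sum_mono2) (use i in auto)
  then have le: "(\<Sum>j<n. sig j) \<le> 1" using w rot_sum[OF i(1), of sig] by simp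
  have "(\<Sum>j<n. sig j) \<noteq> 0"
  proof
    assume "(\<Sum>j<n. sig j) = 0"
    then have z: "\<forall>l<n. sig l = 0" by simp
    have "(\<Sum>t<c i. sig ((i + t) mod n)) = 0" using z n_pos by (intro sum.neutral) auto
    then show False using w by simp
  qed
  then show ?thesis using le by arith
qed

lemma mod_not_p:
  assumes p: "p < n" and t: "t + 1 < n"
  shows "((p + 1) mod n + t) mod n \<noteq> p"
proof (cases "p + 1 < n")
  case True
  then have e: "(p + 1) mod n = p + 1" by simp
  show ?thesis
  proof (cases "p + 1 + t < n")
    case True then show ?thesis using e by simp
  next
    case False
    then have "(p + 1 + t) mod n = (p + 1 + t - n) mod n" by (simp add: le_mod_geq)
    also have "\<dots> = p + 1 + t - n" using p t by simp
    finally show ?thesis using e p t False by simp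
  qed
next
  case False
  then have "p + 1 = n" using p by simp
  then show ?thesis using t by simp
qed

lemma KC: assumes fg: "finite_gldim n c" and s1: "(\<Sum>j<n. sig j) = 1"
  shows "card {i. i < n \<and> c i = n} = 1"
proof -
  obtain p where p: "p < n" "sig p \<noteq> 0"
  proof (rule ccontr)
    assume "\<not> thesis"
    then have "\<forall>l<n. sig l = 0" using that by blast
    then have "(\<Sum>j<n. sig j) = 0" by simp
    then show False using s1 by simp
  qed
  have sp: "sig p = 1" using p sig_le1[of p] by simp
  have "(\<Sum>j<n. sig j) = sig p + (\<Sum>j\<in>{..<n} - {p}. sig j)"
    using p by (simp add: sum.remove)
  then have "(\<Sum>j\<in>{..<n} - {p}. sig j) = 0" using s1 sp by simp
  then have oth: "l < n \<Longrightarrow> l \<noteq> p \<Longrightarrow> sig l = 0" for l by simp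
  have cp: "c p \<le> n"
  proof (rule ccontr)
    assume "\<not> c p \<le> n"
    then have sub: "{0, n} \<subseteq> {..<c p}" by auto
    have "(\<Sum>t\<in>{0, n}. sig ((p + t) mod n)) \<le> (\<Sum>t<c p. sig ((p + t) mod n))"
      using sub by (intro sum_mono2) auto
    moreover have "(\<Sum>t\<in>{0, n}. sig ((p + t) mod n)) = 2" using p sp n_pos by simp
    ultimately show False using window[OF fg p(1)] by simp
  qed
  define i where "i = (p + 1) mod n"
  have i: "i < n" using n_pos by (simp add: i_def)
  have ci: "n \<le> c i"
  proof (rule ccontr)
    assume "\<not> n \<le> c i"
    then have "(\<Sum>t<c i. sig ((i + t) mod n)) = 0"
      using oth mod_not_p[OF p(1)] n_pos by (intro sum.neutral) (auto simp: i_def)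
    then show False using window[OF fg i] by simp
  qed
  define lo where "lo = int p + 1 - int n"
  have hp: "h (int p) \<le> int p" using cp p by (simp add: h_def F_def)
  have "h lo = h (int p + 1 + (-1) * int n) " by (simp add: lo_def)
  also have "\<dots> = h (int p + 1) - int n" using h_per[of "int p + 1" "-1"] by simp
  finally have hlo: "h lo = h (int p + 1) - int n" .
  have "nat ((int p + 1) mod int n) = i" by (simp add: i_def nat_mod_as_int add.commute)
  then have "h (int p + 1) = int p + 1 + int (c i) - int n" by (simp add: h_def F_def)
  then have "lo \<le> h lo" using hlo ci by (simp add: lo_def)
  moreover have "lo \<le> int p" using n_pos by (simp add: lo_def)
  ultimately obtain x where "h x = x" using fixpt_exists[OF h_mono hp] by blast
  then have cx: "c (nat (x mod int n)) = n" by (simp add: h_fix_iff)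
  define r where "r = nat (x mod int n)"
  have r: "r < n" "c r = n" using cx nmod_lt[of x] by (simp_all add: r_def)
  have "{i. i < n \<and> c i = n} = {r}" using Uniq[OF fg] r by blast
  then show ?thesis by simp
qed

end

theorem proposition4p4:
  fixes n :: nat and c :: "nat \<Rightarrow> nat"
  assumes "nakayama_kupisch n c"
  shows "((finite_gldim n c \<and> magnitude n c = 1) \<longleftrightarrow> card {i. i < n \<and> c i = n} = 1)
       \<and> (card {i. i < n \<and> c i = n} = 1 \<longleftrightarrow> (finite_gldim n c \<and> loewy_length n c \<ge> n))"
proof -
  have base: "n \<ge> 1 \<and> (\<forall>i<n. 1 \<le> c i \<and> c i \<le> c ((i + 1) mod n) + 1)"
  proof (cases "nakayama_linear n c")
    case True
    then have n1: "n \<ge> 1" and cl: "c (n - 1) = 1"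
      and cr: "\<And>i. i + 1 < n \<Longrightarrow> c i \<ge> 2 \<and> c (i + 1) \<ge> c i - 1"
      by (auto simp: nakayama_linear_def)
    have "\<forall>i<n. 1 \<le> c i \<and> c i \<le> c ((i + 1) mod n) + 1"
    proof (intro allI impI)
      fix i assume i: "i < n"
      show "1 \<le> c i \<and> c i \<le> c ((i + 1) mod n) + 1"
      proof (cases "i + 1 < n")
        case True
        have e: "(i + 1) mod n = i + 1" using True by simp
        have h1: "c i \<ge> 2" and h2: "c (i + 1) \<ge> c i - 1" using cr[OF True] by simp_all
        show ?thesis unfolding e using h1 h2 by (intro conjI; linarith)
      next
        case False
        then have "i = n - 1" using i by simp
        then show ?thesis using cl by simp
      qed
    qed
    then show ?thesis using n1 by simp
  next
    case False
    then have "nakayama_cyclic n c" using assms by (simp add: nakayama_kupisch_def)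
    then show ?thesis by (auto simp: nakayama_cyclic_def)
  qed
  interpret nak n c using base by unfold_locales auto
  have A: "finite_gldim n c \<and> magnitude n c = 1 \<Longrightarrow> card {i. i < n \<and> c i = n} = 1"
  proof -
    assume a: "finite_gldim n c \<and> magnitude n c = 1"
    then have "(of_nat (\<Sum>j<n. sig j) :: rat) = 1" using magnitude_eq by simp
    then have "(\<Sum>j<n. sig j) = 1" by (metis of_nat_1 of_nat_eq_iff)
    then show ?thesis using KC a by blast
  qed
  have B: "card {i. i < n \<and> c i = n} = 1 \<Longrightarrow> finite_gldim n c \<and> magnitude n c = 1 \<and> loewy_length n c \<ge> n"
  proof -
    assume a: "card {i. i < n \<and> c i = n} = 1"
    have fg: "finite_gldim n c" by (rule K3[OF a])
    obtain q where q: "{i. i < n \<and> c i = n} = {q}" by (rule card_1_singletonE[OF a])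
    have "q \<in> {i. i < n \<and> c i = n}" using q by simp
    then have qn: "q < n" "c q = n" by simp_all
    have "magnitude n c = 1" using magnitude_eq[OF fg] KE[OF fg qn] by simp
    moreover have "loewy_length n c \<ge> n"
      unfolding loewy_length_def using qn by (intro Max_ge_iff[THEN iffD2]) auto
    ultimately show ?thesis using fg by simp
  qed
  have C: "finite_gldim n c \<and> loewy_length n c \<ge> n \<Longrightarrow> card {i. i < n \<and> c i = n} = 1"
    using KD KC by blast
  show ?thesis using A B C by blast
qed

end
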